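(* Let $\alpha>0$, $\gamma\in(0,1)$ and suppose $2k\le\gamma n$. Suppose the data $x_1,\dots,x_n$ have histogram $\theta=(\theta_1,\dots,\theta_r,0,\dots,0)\in\Theta$ for some $1\le r<k$ (all coordinates after the $r$-th equal zero). Let $z=(z_1,\dots,z_k)$ be given by $z_j=\theta_j$ if $\theta_j=0$, and $z_j=\theta_j+\frac{2}{n\alpha}L_j$ otherwise, where $L_1,\dots,L_k$ are i.i.d. Laplace random variables with mean zero and rate one, and let $\delta(z)\in\arg\min_{\theta'\in\Theta}\|z-\theta'\|_1$. Then $\|\theta-\delta(z)\|_1=O_P\!\left(\frac{r}{\alpha n}\right)$; that is, for every $\varepsilon>0$ there is $M<\infty$ depending only on $\varepsilon$ such that $\mathbb P\big(\|\theta-\delta(z)\|_1> M\,\frac{r}{\alpha n}\big)\le\varepsilon$.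
   Context: The sample space is partitioned into $k$ cells $B_1,\dots,B_k$; the histogram of $x_1,\dots,x_n$ is $\theta_j=\frac1n\sum_{i=1}^n\mathbf 1\{x_i\in B_j\}$, and $\Theta=\{(a_1/n,\dots,a_k/n):a_j\in\mathbb Z_{\ge0},\ \sum_ja_j=n\}$ is the set of all such histograms. $\|v\|_1=\sum_j|v_j|$. The Laplace distribution with mean zero and rate one has density $\frac12e^{-|x|}$. The probability is over the Laplace noise. *)

theory Defs
  imports "HOL-Probability.Probability"
begin

definition laplace :: "real measure" where
  "laplace = density lborel (\<lambda>x. ennreal (exp (- \<bar>x\<bar>) / 2))"

text \<open>Joint law of k i.i.d. Laplace variables L_0, ..., L_(k-1) (0-indexed cells).\<close>
definition laplace_noise :: "nat \<Rightarrow> (nat \<Rightarrow> real) measure" where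
  "laplace_noise k = PiM {..<k} (\<lambda>_. laplace)"

definition Hist :: "nat \<Rightarrow> nat \<Rightarrow> (nat \<Rightarrow> real) set" where
  "Hist n k = {\<theta>. \<exists>a::nat \<Rightarrow> nat. (\<Sum>j<k. a j) = n \<and>
       (\<forall>j. \<theta> j = (if j < k then real (a j) / real n else 0))}"

definition l1 :: "nat \<Rightarrow> (nat \<Rightarrow> real) \<Rightarrow> real" where
  "l1 k v = (\<Sum>j<k. \<bar>v j\<bar>)"

definition privatize :: "nat \<Rightarrow> nat \<Rightarrow> real \<Rightarrow> (nat \<Rightarrow> real) \<Rightarrow> (nat \<Rightarrow> real) \<Rightarrow> (nat \<Rightarrow> real)" where
  "privatize n k \<alpha> \<theta> L = (\<lambda>j. if j < k then
       (if \<theta> j = 0 then \<theta> j else \<theta> j + 2 / (real n * \<alpha>) * L j) else 0)"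

end

theory Submission
  imports Defs
begin

lemma refl_int:
  fixes f :: "real \<Rightarrow> ennreal" assumes [measurable]: "f \<in> borel_measurable borel"
  shows "(\<integral>\<^sup>+x. f (- x) \<partial>lborel) = (\<integral>\<^sup>+x. f x \<partial>lborel)"
proof -
  have "(\<integral>\<^sup>+x. f x \<partial>lborel) = (\<integral>\<^sup>+x. f x \<partial>distr lborel borel uminus)"
    by (simp add: lborel_distr_uminus)
  also have "\<dots> = (\<integral>\<^sup>+x. f (- x) \<partial>lborel)"
    by (subst nn_integral_distr) auto
  finally show ?thesis by simp
qed

lemma lap_moment:
  "(\<integral>\<^sup>+x. ennreal (exp (- \<bar>x\<bar>) / 2 * \<bar>x\<bar> ^ i) \<partial>lborel) = ennreal (fact i)"
proof -
  let ?e = "\<lambda>x. ennreal (erlang_density 0 1 x * x ^ i / 2)"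
  have nn: "0 \<le> erlang_density 0 1 x * x ^ i" for x
    by (auto simp: erlang_density_def)
  have "(\<integral>\<^sup>+x. ennreal (exp (- \<bar>x\<bar>) / 2 * \<bar>x\<bar> ^ i) \<partial>lborel)
      = (\<integral>\<^sup>+x. ?e x + ?e (- x) \<partial>lborel)"
  proof (intro nn_integral_cong_AE eventually_mono[OF AE_lborel_singleton[of 0]])
    fix x :: real assume "x \<noteq> 0"
    then show "ennreal (exp (- \<bar>x\<bar>) / 2 * \<bar>x\<bar> ^ i) = ?e x + ?e (- x)"
      by (cases "x < 0") (auto simp: erlang_density_def power_minus_odd simp flip: ennreal_plus)
  qed
  also have "\<dots> = (\<integral>\<^sup>+x. ?e x \<partial>lborel) + (\<integral>\<^sup>+x. ?e (- x) \<partial>lborel)"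
    by (rule nn_integral_add) (auto simp: erlang_density_def)
  also have "(\<integral>\<^sup>+x. ?e (- x) \<partial>lborel) = (\<integral>\<^sup>+x. ?e x \<partial>lborel)"
    by (rule refl_int) (auto simp: erlang_density_def)
  also have "(\<integral>\<^sup>+x. ?e x \<partial>lborel) = (\<integral>\<^sup>+x. ennreal (erlang_density 0 1 x * x ^ i) * ennreal (1/2) \<partial>lborel)"
  proof (intro nn_integral_cong)
    fix x
    have "ennreal (erlang_density 0 1 x * x ^ i) * ennreal (1/2) = ennreal (erlang_density 0 1 x * x ^ i * (1/2))"
      using nn[of x] by (subst ennreal_mult[symmetric]) auto
    then show "?e x = ennreal (erlang_density 0 1 x * x ^ i) * ennreal (1/2)" by simp
  qed
  also have "\<dots> = (\<integral>\<^sup>+x. ennreal (erlang_density 0 1 x * x ^ i) \<partial>lborel) * ennreal (1/2)"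
    by (rule nn_integral_multc) (auto simp: erlang_density_def)
  also have "\<dots> = ennreal (fact i) * ennreal (1/2)"
    by (simp add: nn_integral_erlang_ith_moment)
  also have "ennreal (fact i) * ennreal (1/2) = ennreal (fact i / 2)"
    by (subst ennreal_mult[symmetric]) auto
  finally show ?thesis
    by (simp flip: ennreal_plus)
qed

lemma lap_prob: "prob_space laplace"
proof
  have "emeasure laplace (space laplace) = (\<integral>\<^sup>+x. ennreal (exp (- \<bar>x\<bar>) / 2) * indicator UNIV x \<partial>lborel)"
    unfolding laplace_def by (subst emeasure_density) auto
  also have "\<dots> = (\<integral>\<^sup>+x. ennreal (exp (- \<bar>x\<bar>) / 2 * \<bar>x\<bar> ^ 0) \<partial>lborel)" by simp
  also have "\<dots> = 1" using lap_moment[of 0] by simp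
  finally show "emeasure laplace (space laplace) = 1" .
qed

lemma lap_abs: "(\<integral>\<^sup>+x. ennreal \<bar>x\<bar> \<partial>laplace) = 1"
proof -
  have "(\<integral>\<^sup>+x. ennreal \<bar>x\<bar> \<partial>laplace) = (\<integral>\<^sup>+x. ennreal (exp (- \<bar>x\<bar>) / 2) * ennreal \<bar>x\<bar> \<partial>lborel)"
    unfolding laplace_def by (subst nn_integral_density) auto
  also have "\<dots> = (\<integral>\<^sup>+x. ennreal (exp (- \<bar>x\<bar>) / 2 * \<bar>x\<bar> ^ 1) \<partial>lborel)"
    by (intro nn_integral_cong, subst ennreal_mult[symmetric]) auto
  also have "\<dots> = 1" using lap_moment[of 1] by simp
  finally show ?thesis .
qed

lemma noise_comp:
  assumes "j < k"
  shows "(\<integral>\<^sup>+L. ennreal \<bar>L j\<bar> \<partial>laplace_noise k) = 1"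
proof -
  have "(\<integral>\<^sup>+L. ennreal \<bar>L j\<bar> \<partial>laplace_noise k) = (\<integral>\<^sup>+x. ennreal \<bar>x\<bar> \<partial>distr (laplace_noise k) laplace (\<lambda>L. L j))"
    unfolding laplace_noise_def using assms
    by (subst nn_integral_distr) (auto simp: laplace_def)
  also have "distr (laplace_noise k) laplace (\<lambda>L. L j) = laplace"
    unfolding laplace_noise_def using assms lap_prob by (intro distr_PiM_component) auto
  finally show ?thesis using lap_abs by simp
qed

lemma noise_sum:
  assumes "r \<le> k"
  shows "(\<integral>\<^sup>+L. ennreal (\<Sum>j<r. \<bar>L j\<bar>) \<partial>laplace_noise k) = of_nat r"
proof -
  have "(\<integral>\<^sup>+L. ennreal (\<Sum>j<r. \<bar>L j\<bar>) \<partial>laplace_noise k) = (\<integral>\<^sup>+L. (\<Sum>j<r. ennreal \<bar>L j\<bar>) \<partial>laplace_noise k)"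
    by (intro nn_integral_cong) (simp add: sum_ennreal)
  also have "\<dots> = (\<Sum>j<r. \<integral>\<^sup>+L. ennreal \<bar>L j\<bar> \<partial>laplace_noise k)"
  proof (rule nn_integral_sum)
    fix j assume "j \<in> {..<r}"
    then have j: "j \<in> {..<k}" using assms by auto
    have "(\<lambda>L. L j) \<in> measurable (laplace_noise k) laplace"
      unfolding laplace_noise_def by (rule measurable_component_singleton[OF j])
    then have "(\<lambda>L. L j) \<in> borel_measurable (laplace_noise k)"
      by (simp add: laplace_def)
    then show "(\<lambda>L. ennreal \<bar>L j\<bar>) \<in> borel_measurable (laplace_noise k)"
      by measurable
  qed
  also have "\<dots> = (\<Sum>j<r. 1)"
    using assms by (intro sum.cong refl noise_comp) auto
  finally show ?thesis by simp
qed

lemma det_bound: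
  assumes "r \<le> k" "\<forall>j. r \<le> j \<longrightarrow> \<theta> j = 0" "d \<in> Hist n k"
    and opt: "l1 k (privatize n k \<alpha> \<theta> L - d) \<le> l1 k (privatize n k \<alpha> \<theta> L - \<theta>)"
    and pos: "n > 0" "\<alpha> > 0"
  shows "l1 k (\<theta> - d) \<le> 2 * (2 / (real n * \<alpha>) * (\<Sum>j<r. \<bar>L j\<bar>))"
proof -
  let ?z = "privatize n k \<alpha> \<theta> L"
  have "l1 k (\<theta> - d) \<le> l1 k (?z - \<theta>) + l1 k (?z - d)"
    unfolding l1_def sum.distrib[symmetric]
    by (intro sum_mono) (simp only: minus_apply; linarith)
  also have "\<dots> \<le> 2 * l1 k (?z - \<theta>)" using opt by simp
  also have "l1 k (?z - \<theta>) \<le> (\<Sum>j<k. if j < r then 2 / (real n * \<alpha>) * \<bar>L j\<bar> else 0)"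
    unfolding l1_def
  proof (intro sum_mono)
    fix j assume "j \<in> {..<k}"
    then show "\<bar>(?z - \<theta>) j\<bar> \<le> (if j < r then 2 / (real n * \<alpha>) * \<bar>L j\<bar> else 0)"
      using assms(2) pos by (auto simp: privatize_def abs_mult)
  qed
  also have "(\<Sum>j<k. if j < r then 2 / (real n * \<alpha>) * \<bar>L j\<bar> else 0) = (\<Sum>j<r. 2 / (real n * \<alpha>) * \<bar>L j\<bar>)"
  proof -
    have "{..<r} = {j\<in>{..<k}. j < r}" using assms(1) by auto
    then show ?thesis by (simp add: sum.inter_filter[symmetric])
  qed
  finally show ?thesis by (simp add: sum_distrib_left fun_diff_def)
qed

lemma comp_meas: "j < k \<Longrightarrow> (\<lambda>L. L j) \<in> borel_measurable (laplace_noise k)"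
proof -
  assume "j < k"
  then have j: "j \<in> {..<k}" by auto
  have "(\<lambda>L. L j) \<in> measurable (laplace_noise k) laplace"
    unfolding laplace_noise_def by (rule measurable_component_singleton[OF j])
  then show ?thesis by (simp add: laplace_def)
qed

theorem theorem5p1:
  shows "\<forall>\<epsilon>>0. \<exists>M::real. \<forall>(n::nat) (k::nat) (r::nat) (\<alpha>::real) (\<gamma>::real)
           (\<theta>::nat \<Rightarrow> real) (\<delta>::(nat \<Rightarrow> real) \<Rightarrow> (nat \<Rightarrow> real)).
     \<alpha> > 0 \<longrightarrow> 0 < \<gamma> \<longrightarrow> \<gamma> < 1 \<longrightarrow> 2 * real k \<le> \<gamma> * real n \<longrightarrow>
     1 \<le> r \<longrightarrow> r < k \<longrightarrow> \<theta> \<in> Hist n k \<longrightarrow> (\<forall>j. r \<le> j \<longrightarrow> \<theta> j = 0) \<longrightarrow>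
     (\<forall>w. \<delta> w \<in> Hist n k \<and> (\<forall>\<theta>'\<in>Hist n k. l1 k (w - \<delta> w) \<le> l1 k (w - \<theta>'))) \<longrightarrow>
     (\<lambda>L. \<delta> (privatize n k \<alpha> \<theta> L)) \<in> laplace_noise k \<rightarrow>\<^sub>M count_space UNIV \<longrightarrow>
     measure (laplace_noise k)
       {L \<in> space (laplace_noise k).
          l1 k (\<theta> - \<delta> (privatize n k \<alpha> \<theta> L)) > M * real r / (\<alpha> * real n)} \<le> \<epsilon>"
proof (intro allI impI)
  fix \<epsilon> :: real assume \<epsilon>: "\<epsilon> > 0"
  show "\<exists>M::real. \<forall>(n::nat) (k::nat) (r::nat) (\<alpha>::real) (\<gamma>::real)
           (\<theta>::nat \<Rightarrow> real) (\<delta>::(nat \<Rightarrow> real) \<Rightarrow> (nat \<Rightarrow> real)).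
     \<alpha> > 0 \<longrightarrow> 0 < \<gamma> \<longrightarrow> \<gamma> < 1 \<longrightarrow> 2 * real k \<le> \<gamma> * real n \<longrightarrow>
     1 \<le> r \<longrightarrow> r < k \<longrightarrow> \<theta> \<in> Hist n k \<longrightarrow> (\<forall>j. r \<le> j \<longrightarrow> \<theta> j = 0) \<longrightarrow>
     (\<forall>w. \<delta> w \<in> Hist n k \<and> (\<forall>\<theta>'\<in>Hist n k. l1 k (w - \<delta> w) \<le> l1 k (w - \<theta>'))) \<longrightarrow>
     (\<lambda>L. \<delta> (privatize n k \<alpha> \<theta> L)) \<in> laplace_noise k \<rightarrow>\<^sub>M count_space UNIV \<longrightarrow>
     measure (laplace_noise k)
       {L \<in> space (laplace_noise k).
          l1 k (\<theta> - \<delta> (privatize n k \<alpha> \<theta> L)) > M * real r / (\<alpha> * real n)} \<le> \<epsilon>"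
  proof (intro exI[of _ "4 / \<epsilon>"] allI impI)
    fix n k r :: nat and \<alpha> \<gamma> :: real and \<theta> :: "nat \<Rightarrow> real" and \<delta> :: "(nat \<Rightarrow> real) \<Rightarrow> (nat \<Rightarrow> real)"
    assume \<alpha>: "\<alpha> > 0" and g0: "0 < \<gamma>" and g1: "\<gamma> < 1" and nk: "2 * real k \<le> \<gamma> * real n"
      and r1: "1 \<le> r" and rk: "r < k" and th: "\<theta> \<in> Hist n k" and zero: "\<forall>j. r \<le> j \<longrightarrow> \<theta> j = 0"
      and dl: "\<forall>w. \<delta> w \<in> Hist n k \<and> (\<forall>\<theta>'\<in>Hist n k. l1 k (w - \<delta> w) \<le> l1 k (w - \<theta>'))"
    have n: "n > 0"
    proof (rule ccontr)
      assume "\<not> n > 0" then have "n = 0" by simp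
      then show False using nk rk by simp
    qed
    let ?N = "laplace_noise k"
    let ?S = "\<lambda>L. \<Sum>j<r. \<bar>L j\<bar>"
    let ?B = "{L \<in> space ?N. l1 k (\<theta> - \<delta> (privatize n k \<alpha> \<theta> L)) > 4 / \<epsilon> * real r / (\<alpha> * real n)}"
    let ?T = "{L \<in> space ?N. 1 \<le> ennreal (\<epsilon> / real r) * ennreal (?S L)}"
    have Sm: "(\<lambda>L. ?S L) \<in> borel_measurable ?N"
      using rk by (intro borel_measurable_sum borel_measurable_abs comp_meas) auto
    have sub: "?B \<subseteq> ?T"
    proof
      fix L assume L: "L \<in> ?B"
      have bd: "l1 k (\<theta> - \<delta> (privatize n k \<alpha> \<theta> L)) \<le> 2 * (2 / (real n * \<alpha>) * ?S L)"
        using rk zero dl th n \<alpha> by (intro det_bound) auto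
      have "4 / \<epsilon> * real r / (\<alpha> * real n) < 2 * (2 / (real n * \<alpha>) * ?S L)"
        using L bd by auto
      then have "4 * real r / \<epsilon> < 4 * ?S L"
        using n \<alpha> by (simp add: field_simps)
      then have "real r / \<epsilon> < ?S L" by simp
      then have "1 \<le> \<epsilon> / real r * ?S L"
        using \<epsilon> r1 by (simp add: field_simps)
      moreover have "ennreal (\<epsilon> / real r) * ennreal (?S L) = ennreal (\<epsilon> / real r * ?S L)"
        using \<epsilon> by (subst ennreal_mult[symmetric]) auto
      ultimately show "L \<in> ?T" using L by auto
    qed
    have Tm: "?T \<in> sets ?N" using Sm by measurable
    have "emeasure ?N ?T \<le> ennreal (\<epsilon> / real r) * (\<integral>\<^sup>+L. ennreal (?S L) * indicator (space ?N) L \<partial>?N)"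
      using Sm by (intro nn_integral_Markov_inequality) auto
    also have "(\<integral>\<^sup>+L. ennreal (?S L) * indicator (space ?N) L \<partial>?N) = (\<integral>\<^sup>+L. ennreal (?S L) \<partial>?N)"
      by (intro nn_integral_cong) simp
    also have "\<dots> = of_nat r" using rk by (intro noise_sum) auto
    also have "ennreal (\<epsilon> / real r) * of_nat r = ennreal \<epsilon>"
    proof -
      have "ennreal (\<epsilon> / real r) * ennreal (real r) = ennreal (\<epsilon> / real r * real r)"
        using \<epsilon> by (subst ennreal_mult[symmetric]) auto
      then show ?thesis using r1 by (simp add: ennreal_of_nat_eq_real_of_nat)
    qed
    finally have T: "emeasure ?N ?T \<le> ennreal \<epsilon>" .
    show "measure ?N ?B \<le> \<epsilon>"
    proof (cases "?B \<in> sets ?N")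
      case True
      have "emeasure ?N ?B \<le> ennreal \<epsilon>"
        using emeasure_mono[OF sub Tm] T by simp
      then have "enn2real (emeasure ?N ?B) \<le> enn2real (ennreal \<epsilon>)"
        by (intro enn2real_mono) auto
      then show ?thesis using \<epsilon> by (simp add: measure_def)
    next
      case False
      then show ?thesis using \<epsilon> by (simp add: measure_notin_sets)
    qed
  qed
qed

end
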